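(* Let $C$ be a connected $2$-dimensional unoriented resolution configuration, and let $F_C: V_0(C)\to V_1(C)$ be a non-zero associated map of bidegree $(2,4)$ such that the assignment $C\mapsto F_C$ satisfies the naturality rule, the disoriented rule, the filtration rule and the duality rule. Then $C$ is a tree or a dual tree (i.e. $F_C$ would have to be zero otherwise), and: if $C$ is a tree with starting circles $x_1,x_2,x_3$ and ending circle $y$, then $F_C(x_1x_2x_3)=y$ and $F_C$ vanishes on all other monomials; if $C$ is a dual tree with starting circle $x$ and ending circles $y_1,y_2,y_3$, then $F_C(1)=1\otimes1\otimes1$ and $F_C(x)=0$.
   Context: A $k$-dimensional resolution configuration $C$ is a finite set of pairwise disjoint embedded circles $x_1,\dots,x_t$ in $S^2$ together with $k$ embedded arcs $\gamma_1,\dots,\gamma_k$ which are pairwise disjoint, whose endpoints lie on the circles and whose interiors are disjoint from the circles. It is oriented if the arcs are oriented, and unoriented otherwise. The circles $x_i$ are the starting circles; the ending circles $y_1,\dots,y_s$ are obtained from the starting circles by performing surgery along all arcs. The dual configuration $C^*$ consists of the ending circles together with the dual arcs $\gamma_i^*$ obtained by rotating $\gamma_i$ by $90$ degrees counterclockwise (so the starting circles of $C^*$ are the ending circles of $C$ and vice versa). Writing $S^2=\mathbb{R}^2\cup\{\infty\}$, the mirror $m(C)$ is the reflection of $C$ in $\mathbb{R}\times\{0\}$. $C$ is connected if the graph whose vertices are the circles and whose edges are the arcs is connected. A connected $k$-dimensional configuration is a tree if it has exactly $k+1$ starting circles and one ending circle; a dual tree is the dual of a tree (one starting circle, $k+1$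 ending circles). Set $V_0(C)=\bigotimes_{i=1}^t\mathbb{F}_2[x_i]/(x_i^2)$ and $V_1(C)=\bigotimes_{j=1}^s\mathbb{F}_2[y_j]/(y_j^2)$, with basis of monomials (products of circle variables). Quantum grading: in each factor $\mathrm{gr}_q(1)=1$, $\mathrm{gr}_q(x)=-1$, added over tensor factors; for a $k$-dimensional configuration the quantum grading of monomials of $V_1(C)$ is additionally shifted up by $k$. A linear map $F_C:V_0(C)\to V_1(C)$ for a $k$-dimensional $C$ has bidegree $(k,p)$ if it sends each monomial to a linear combination of monomials whose quantum grading exceeds that of the source by $p$. Rules for an assignment $C\mapsto F_C$: (Naturality) if an orientation-preserving diffeomorphism of $S^2$ sends $C$ to $C'$, then $F_C=F_{C'}$ under the induced identifications $V_0(C)=V_0(C')$, $V_1(C)=V_1(C')$. (Disoriented) if $C,C'$ differ only in the orientations of arcs, $F_C=F_{C'}$. (Duality) using the canonical identifications $V_0(m(C^* ))=V_1(C)$ and $V_1(m(C^* ))=V_0(C)$ and the involution $a\mapsto a^*$ on monomials induced by $1^*=z$, $z^*=1$ in each factor $\mathbb{F}_2[z]/(z^2)$, for all monomials $a\in V_0(C)$, $b\in V_1(C)$ the coefficient of $b$ in $F_C(a)$ equals the coefficient of $a^*$ in $F_{m(C^* )}(b^* )$. (Filtration) for a point $P$ on the starting circles, let $x(P)$, $y(P)$ be the starting and ending circles containing $P$; if a monomial $a$ is divisible by $x(P)$ and the coefficient of a monomial $b$ in $F_C(a)$ is non-zero, then $b$ is divisible by $y(P)$. *)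

theory Defs
  imports Main
begin

text \<open>
Combinatorial model of a connected unoriented resolution configuration with k \<ge> 1 arcs
in S^2 (oriented).  Shrinking every arc to a point turns the union of the starting circles
and the arcs into a connected 4-valent graph embedded in S^2, one vertex per arc.  We encode
it as a combinatorial map on a finite set of darts (half-edges) drt:
  iota  -- edge involution (fixed-point free),
  rho   -- counterclockwise rotation of darts around each vertex (all orbits of size 4),
  smo   -- at each vertex, which of the two smoothings is the starting one:
           the starting circles pair dart h with rho h if smo h, with rho^-1 h otherwise
           (so smo alternates around a vertex); the ending circles use the other pairing.
Planarity (the map lives on S^2) is Euler's formula: #faces = #vertices + 2,
where #vertices = card drt div 4 is the dimension k of the configuration.
\<close>

record cfg =
  drt  :: "nat set"
  iota :: "nat \<Rightarrow> nat"
  rho  :: "nat \<Rightarrow> nat"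
  smo  :: "nat \<Rightarrow> bool"

definition rel_of :: "(nat \<Rightarrow> nat) \<Rightarrow> nat set \<Rightarrow> (nat \<times> nat) set" where
  "rel_of f D = {(h, f h) | h. h \<in> D}"

definition comp_of :: "(nat \<times> nat) set \<Rightarrow> nat \<Rightarrow> nat set" where
  "comp_of R h = {h'. (h, h') \<in> R\<^sup>*}"

definition comps :: "(nat \<times> nat) set \<Rightarrow> nat set \<Rightarrow> nat set set" where
  "comps R D = comp_of R ` D"

definition start_pair :: "cfg \<Rightarrow> nat \<Rightarrow> nat" where
  "start_pair C h = (if smo C h then rho C h else (rho C ^^ 3) h)"

definition end_pair :: "cfg \<Rightarrow> nat \<Rightarrow> nat" where
  "end_pair C h = (if smo C h then (rho C ^^ 3) h else rho C h)"

definition start_rel :: "cfg \<Rightarrow> (nat \<times> nat) set" where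
  "start_rel C = rel_of (iota C) (drt C) \<union> rel_of (start_pair C) (drt C)"

definition end_rel :: "cfg \<Rightarrow> (nat \<times> nat) set" where
  "end_rel C = rel_of (iota C) (drt C) \<union> rel_of (end_pair C) (drt C)"

definition start_circles :: "cfg \<Rightarrow> nat set set" where
  "start_circles C = comps (start_rel C) (drt C)"

definition end_circles :: "cfg \<Rightarrow> nat set set" where
  "end_circles C = comps (end_rel C) (drt C)"

definition start_circle_of :: "cfg \<Rightarrow> nat \<Rightarrow> nat set" where
  "start_circle_of C h = comp_of (start_rel C) h"

definition end_circle_of :: "cfg \<Rightarrow> nat \<Rightarrow> nat set" where
  "end_circle_of C h = comp_of (end_rel C) h"

definition faces :: "cfg \<Rightarrow> nat set set" where
  "faces C = comps (rel_of (rho C \<circ> iota C) (drt C)) (drt C)"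

definition dim :: "cfg \<Rightarrow> nat" where
  "dim C = card (drt C) div 4"

definition wf_config :: "cfg \<Rightarrow> bool" where
  "wf_config C \<longleftrightarrow>
     finite (drt C) \<and> drt C \<noteq> {} \<and>
     (\<forall>h\<in>drt C. iota C h \<in> drt C \<and> iota C h \<noteq> h \<and> iota C (iota C h) = h) \<and>
     (\<forall>h\<in>drt C. rho C h \<in> drt C) \<and> inj_on (rho C) (drt C) \<and>
     (\<forall>h\<in>drt C. (rho C ^^ 4) h = h \<and> (rho C ^^ 2) h \<noteq> h \<and> rho C h \<noteq> h) \<and>
     (\<forall>h\<in>drt C. smo C (rho C h) = (\<not> smo C h)) \<and>
     (\<forall>h\<in>drt C. \<forall>h'\<in>drt C.
        (h, h') \<in> (rel_of (iota C) (drt C) \<union> rel_of (rho C) (drt C))\<^sup>*) \<and>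
     card (faces C) = dim C + 2"

text \<open>Mirror of the dual configuration: dualising swaps the two smoothings, mirroring
reverses the rotation; together the starting circles of m(C^*) are literally the ending
circles of C and vice versa.\<close>
definition mirror_dual :: "cfg \<Rightarrow> cfg" where
  "mirror_dual C = C\<lparr>rho := rho C ^^ 3\<rparr>"

text \<open>Isomorphism = induced by an orientation-preserving diffeomorphism of S^2.\<close>
definition cfg_iso :: "(nat \<Rightarrow> nat) \<Rightarrow> cfg \<Rightarrow> cfg \<Rightarrow> bool" where
  "cfg_iso f C C' \<longleftrightarrow> bij_betw f (drt C) (drt C') \<and>
     (\<forall>h\<in>drt C. f (iota C h) = iota C' (f h) \<and> f (rho C h) = rho C' (f h)
                \<and> smo C' (f h) = smo C h)"

text \<open>An assignment: F C a b is the coefficient (in F_2) of the monomial b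
(a set of ending circles) in F_C(a), a a monomial (set of starting circles).\<close>
type_synonym assignment = "cfg \<Rightarrow> nat set set \<Rightarrow> nat set set \<Rightarrow> bool"

definition naturality :: "assignment \<Rightarrow> bool" where
  "naturality F \<longleftrightarrow> (\<forall>C C' f. wf_config C \<longrightarrow> wf_config C' \<longrightarrow> cfg_iso f C C' \<longrightarrow>
     (\<forall>a b. a \<subseteq> start_circles C \<longrightarrow> b \<subseteq> end_circles C \<longrightarrow>
        F C' ((`) f ` a) ((`) f ` b) = F C a b))"

definition duality :: "assignment \<Rightarrow> bool" where
  "duality F \<longleftrightarrow> (\<forall>C. wf_config C \<longrightarrow>
     (\<forall>a b. a \<subseteq> start_circles C \<longrightarrow> b \<subseteq> end_circles C \<longrightarrow>
        F C a b = F (mirror_dual C) (end_circles C - b) (start_circles C - a)))"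

definition filtration :: "assignment \<Rightarrow> bool" where
  "filtration F \<longleftrightarrow> (\<forall>C. wf_config C \<longrightarrow>
     (\<forall>a b h. a \<subseteq> start_circles C \<longrightarrow> b \<subseteq> end_circles C \<longrightarrow> h \<in> drt C \<longrightarrow>
        start_circle_of C h \<in> a \<longrightarrow> F C a b \<longrightarrow> end_circle_of C h \<in> b))"

definition has_qdeg :: "assignment \<Rightarrow> cfg \<Rightarrow> int \<Rightarrow> bool" where
  "has_qdeg F C p \<longleftrightarrow> (\<forall>a b. a \<subseteq> start_circles C \<longrightarrow> b \<subseteq> end_circles C \<longrightarrow> F C a b \<longrightarrow>
     int (card (end_circles C)) - 2 * int (card b) + int (dim C)
       = int (card (start_circles C)) - 2 * int (card a) + p)"

definition map_nonzero :: "assignment \<Rightarrow> cfg \<Rightarrow> bool" where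
  "map_nonzero F C \<longleftrightarrow> (\<exists>a b. a \<subseteq> start_circles C \<and> b \<subseteq> end_circles C \<and> F C a b)"

definition is_tree :: "cfg \<Rightarrow> bool" where
  "is_tree C \<longleftrightarrow> card (start_circles C) = dim C + 1 \<and> card (end_circles C) = 1"

definition is_dual_tree :: "cfg \<Rightarrow> bool" where
  "is_dual_tree C \<longleftrightarrow> card (start_circles C) = 1 \<and> card (end_circles C) = dim C + 1"

end

theory Submission
  imports Defs
begin

definition vx :: "(nat \<Rightarrow> nat) \<Rightarrow> (nat \<Rightarrow> nat) \<Rightarrow> nat \<Rightarrow> nat set" where
  "vx sg tu d = {d, sg d, tu d, sg (tu d)}"

lemma rel_ofI: "h \<in> D \<Longrightarrow> (h, f h) \<in> rel_of f D"
  unfolding rel_of_def by auto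

locale kl =
  fixes D :: "nat set" and io sg tu :: "nat \<Rightarrow> nat"
  assumes fin: "finite D" and cd: "card D div 4 = 2"
  and iD: "\<And>d. d \<in> D \<Longrightarrow> io d \<in> D" and ii: "\<And>d. d \<in> D \<Longrightarrow> io (io d) = d"
  and i1: "\<And>d. d \<in> D \<Longrightarrow> io d \<noteq> d"
  and sD: "\<And>d. d \<in> D \<Longrightarrow> sg d \<in> D" and ss: "\<And>d. d \<in> D \<Longrightarrow> sg (sg d) = d"
  and s1: "\<And>d. d \<in> D \<Longrightarrow> sg d \<noteq> d"
  and tD: "\<And>d. d \<in> D \<Longrightarrow> tu d \<in> D" and tt: "\<And>d. d \<in> D \<Longrightarrow> tu (tu d) = d"
  and t1: "\<And>d. d \<in> D \<Longrightarrow> tu d \<noteq> d"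
  and comm: "\<And>d. d \<in> D \<Longrightarrow> sg (tu d) = tu (sg d)"
  and st: "\<And>d. d \<in> D \<Longrightarrow> sg d \<noteq> tu d"
  and conn: "\<And>x y. x \<in> D \<Longrightarrow> y \<in> D \<Longrightarrow>
     (x, y) \<in> (rel_of io D \<union> rel_of sg D \<union> rel_of tu D)\<^sup>*"
begin

abbreviation "RS \<equiv> rel_of io D \<union> rel_of sg D"

lemma ei: "d \<in> D \<Longrightarrow> (d, io d) \<in> RS\<^sup>*"
  by (rule r_into_rtrancl) (auto intro: rel_ofI)
lemma ei': "d \<in> D \<Longrightarrow> (io d, d) \<in> RS\<^sup>*"
  using ei[of "io d"] iD ii by auto
lemma es: "d \<in> D \<Longrightarrow> (d, sg d) \<in> RS\<^sup>*"
  by (rule r_into_rtrancl) (auto intro: rel_ofI)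
lemma es': "d \<in> D \<Longrightarrow> (sg d, d) \<in> RS\<^sup>*"
  using es[of "sg d"] sD ss by auto

lemma symR: "(x, y) \<in> RS\<^sup>* \<Longrightarrow> (y, x) \<in> RS\<^sup>*"
proof (induction rule: rtrancl_induct)
  case base then show ?case by simp
next
  case (step y z)
  from step.hyps(2) have "y \<in> D \<and> (z = io y \<or> z = sg y)"
    unfolding rel_of_def by auto
  then have "(z, y) \<in> RS\<^sup>*" using ei' es' by auto
  then show ?case using step.IH by (rule rtrancl_trans)
qed

lemma vxD: "d \<in> D \<Longrightarrow> vx sg tu d \<subseteq> D"
  unfolding vx_def using sD tD by auto

lemma vx_card: "d \<in> D \<Longrightarrow> card (vx sg tu d) = 4"
proof -
  assume d: "d \<in> D"
  have a: "sg d \<noteq> d" "tu d \<noteq> d" "sg d \<noteq> tu d" using d s1 t1 st by auto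
  have b: "sg (tu d) \<noteq> d" using d ss tD st by (metis)
  have c: "sg (tu d) \<noteq> sg d" using d ss tD t1 by metis
  have e: "sg (tu d) \<noteq> tu d" using d tD s1 by auto
  show ?thesis unfolding vx_def using a b c e by auto
qed

lemma vx_mem: "d \<in> D \<Longrightarrow> x \<in> vx sg tu d \<Longrightarrow> vx sg tu x = vx sg tu d"
  unfolding vx_def using sD tD ss tt comm by auto

lemma vx_self: "d \<in> vx sg tu d" unfolding vx_def by auto

lemma vx_closed: "d \<in> D \<Longrightarrow> x \<in> vx sg tu d \<Longrightarrow> sg x \<in> vx sg tu d \<and> tu x \<in> vx sg tu d"
  using vx_mem[of d x] unfolding vx_def by auto

lemma card_D: "8 \<le> card D" "card D < 12" using cd by auto

lemma two_vx: assumes d: "d \<in> D"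
  shows "\<exists>b\<in>D. vx sg tu b \<inter> vx sg tu d = {} \<and> D = vx sg tu d \<union> vx sg tu b"
proof -
  have "vx sg tu d \<noteq> D" using vx_card[OF d] card_D by auto
  then obtain b where b: "b \<in> D" "b \<notin> vx sg tu d" using vxD[OF d] by auto
  have dis: "vx sg tu b \<inter> vx sg tu d = {}"
  proof (rule ccontr)
    assume "vx sg tu b \<inter> vx sg tu d \<noteq> {}"
    then obtain x where "x \<in> vx sg tu b" "x \<in> vx sg tu d" by auto
    then have "vx sg tu b = vx sg tu d" using vx_mem b d by metis
    then show False using b vx_self by auto
  qed
  have c8: "card (vx sg tu d \<union> vx sg tu b) = 8"
    using card_Un_disjoint[of "vx sg tu d" "vx sg tu b"] dis vx_card[OF d] vx_card[OF b(1)]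
    by (auto simp: vx_def Int_commute)
  have "D = vx sg tu d \<union> vx sg tu b"
  proof (rule ccontr)
    assume "D \<noteq> vx sg tu d \<union> vx sg tu b"
    then obtain c where c: "c \<in> D" "c \<notin> vx sg tu d \<union> vx sg tu b" using vxD d b by auto
    have dis2: "vx sg tu c \<inter> (vx sg tu d \<union> vx sg tu b) = {}"
    proof (rule ccontr)
      assume "vx sg tu c \<inter> (vx sg tu d \<union> vx sg tu b) \<noteq> {}"
      then obtain x where "x \<in> vx sg tu c" "x \<in> vx sg tu d \<or> x \<in> vx sg tu b" by auto
      then have "vx sg tu c = vx sg tu d \<or> vx sg tu c = vx sg tu b" using vx_mem b d c by metis
      then show False using c vx_self by auto
    qed
    have "card (vx sg tu d \<union> vx sg tu b \<union> vx sg tu c) = 12"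
      using card_Un_disjoint[of "vx sg tu d \<union> vx sg tu b" "vx sg tu c"] dis2 c8 vx_card[OF c(1)]
      by (auto simp: vx_def Int_commute)
    moreover have "vx sg tu d \<union> vx sg tu b \<union> vx sg tu c \<subseteq> D" using vxD d b c by auto
    ultimately have "12 \<le> card D" using fin card_mono by metis
    then show False using card_D by auto
  qed
  then show ?thesis using b dis by auto
qed

lemma cross_exists: assumes d: "d \<in> D" shows "\<exists>y\<in>vx sg tu d. io y \<notin> vx sg tu d"
proof (rule ccontr)
  assume "\<not> ?thesis"
  then have cl: "\<And>y. y \<in> vx sg tu d \<Longrightarrow> io y \<in> vx sg tu d" by auto
  obtain b where b: "b \<in> D" "vx sg tu b \<inter> vx sg tu d = {}" using two_vx[OF d] by auto
  have "(d, b) \<in> (rel_of io D \<union> rel_of sg D \<union> rel_of tu D)\<^sup>*" using conn[OF d b(1)] .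
  then have "b \<in> vx sg tu d"
  proof (induction rule: rtrancl_induct)
    case base then show ?case by (rule vx_self)
  next
    case (step y z)
    from step.hyps(2) have "z = io y \<or> z = sg y \<or> z = tu y" unfolding rel_of_def by auto
    then show ?case using cl[OF step.IH] vx_closed[OF d step.IH] by auto
  qed
  then show False using b vx_self by auto
qed

lemma VL1: assumes d: "d \<in> D" and x: "x \<in> vx sg tu d" and ix: "io x \<in> vx sg tu d" "io x \<noteq> sg x"
  shows "\<forall>y\<in>vx sg tu d. (x, y) \<in> RS\<^sup>*"
proof -
  have xD: "x \<in> D" using x vxD d by auto
  have V: "vx sg tu d = {x, sg x, tu x, sg (tu x)}" using vx_mem[OF d x] unfolding vx_def by simp
  have "io x = tu x \<or> io x = sg (tu x)" using ix V i1[OF xD] by auto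
  then show ?thesis
  proof
    assume h: "io x = tu x"
    have 1: "(x, tu x) \<in> RS\<^sup>*" using ei[OF xD] h by simp
    have 2: "(tu x, sg (tu x)) \<in> RS\<^sup>*" using es tD xD by auto
    show ?thesis using V 1 2 es[OF xD] rtrancl_trans by fastforce
  next
    assume h: "io x = sg (tu x)"
    have 1: "(x, sg (tu x)) \<in> RS\<^sup>*" using ei[OF xD] h by simp
    have 2: "(sg (tu x), tu x) \<in> RS\<^sup>*" using es' tD xD by auto
    show ?thesis using V 1 2 es[OF xD] rtrancl_trans by fastforce
  qed
qed

lemma VL2: assumes d: "d \<in> D" and x: "x \<in> vx sg tu d" and ix: "io x = sg x"
  and y: "y \<in> vx sg tu d" "y \<noteq> x" "y \<noteq> sg x"
  shows "io y \<notin> vx sg tu d"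
proof
  assume iy: "io y \<in> vx sg tu d"
  have xD: "x \<in> D" using x vxD d by auto
  have V: "vx sg tu d = {x, sg x, tu x, sg (tu x)}" using vx_mem[OF d x] unfolding vx_def by simp
  have yD: "y \<in> D" using y vxD d by auto
  have n1: "io y \<noteq> x"
  proof
    assume "io y = x" then have "io (io y) = io x" by simp
    then show False using ii[OF yD] ix y(3) by simp
  qed
  have n2: "io y \<noteq> sg x"
  proof
    assume "io y = sg x" then have "io (io y) = io (sg x)" by simp
    then show False using ii[OF yD] ix ii[OF xD] y(2) by simp
  qed
  have n3: "io y \<noteq> y" using i1 yD by auto
  have yc: "y = tu x \<or> y = sg (tu x)" using V y by auto
  have h: "io (tu x) = sg (tu x)"
    using yc
  proof
    assume yy: "y = tu x"
    then show ?thesis using iy V n1 n2 n3 by auto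
  next
    assume yy: "y = sg (tu x)"
    then have "io y = tu x" using iy V n1 n2 n3 by auto
    then have "io (io y) = io (tu x)" by simp
    then show ?thesis using ii[OF yD] yy by simp
  qed
  have h2: "io (sg (tu x)) = tu x" using h ii tD xD by metis
  have "io (sg x) = x" using ix ii xD by metis
  then have "\<forall>z\<in>vx sg tu d. io z \<in> vx sg tu d" using V h h2 ix by auto
  then show False using cross_exists[OF d] by auto
qed

lemma CB: assumes "finite Rs" and "\<forall>y\<in>D. \<exists>r\<in>Rs. (r, y) \<in> RS\<^sup>*"
  shows "card (comps RS D) \<le> card Rs"
proof -
  have "comps RS D \<subseteq> comp_of RS ` Rs"
  proof
    fix c assume "c \<in> comps RS D"
    then obtain y where y: "y \<in> D" "c = comp_of RS y" unfolding comps_def by auto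
    then obtain r where r: "r \<in> Rs" "(r, y) \<in> RS\<^sup>*" using assms by auto
    have yr: "(y, r) \<in> RS\<^sup>*" using symR[OF r(2)] .
    have "\<And>z. (y, z) \<in> RS\<^sup>* \<longleftrightarrow> (r, z) \<in> RS\<^sup>*"
      using rtrancl_trans[OF yr] rtrancl_trans[OF r(2)] by blast
    then have "comp_of RS y = comp_of RS r" unfolding comp_of_def by auto
    then show "c \<in> comp_of RS ` Rs" using y r by auto
  qed
  then have "card (comps RS D) \<le> card (comp_of RS ` Rs)"
    using assms(1) by (intro card_mono) auto
  also have "\<dots> \<le> card Rs" using assms(1) by (rule card_image_le)
  finally show ?thesis .
qed

lemma card2: "card {p, q} \<le> 2" by (simp add: card_insert_if)
lemma card3: "card {p, q, r} \<le> 3" by (simp add: card_insert_if)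

lemma L1': assumes a: "a \<in> D" and b: "b \<in> D" and dis: "vx sg tu b \<inter> vx sg tu a = {}"
  and DU: "D = vx sg tu a \<union> vx sg tu b" and nb: "\<forall>x\<in>vx sg tu b. io x \<noteq> sg x"
  shows "card (comps RS D) \<le> 2"
proof (cases "\<exists>x\<in>vx sg tu b. io x \<in> vx sg tu b")
  case True
  then obtain x where xB: "x \<in> vx sg tu b" "io x \<in> vx sg tu b" by auto
  have allB: "\<forall>y\<in>vx sg tu b. (x, y) \<in> RS\<^sup>*" using VL1[OF b xB] nb xB by auto
  have hlp: "(x, z) \<in> RS\<^sup>*" if "z \<in> D" "io z \<in> vx sg tu b" for z
    using allB that ei'[OF that(1)] rtrancl_trans by metis
  show ?thesis
  proof (cases "\<exists>y\<in>vx sg tu a. io y = sg y")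
    case True
    then obtain y where y: "y \<in> vx sg tu a" "io y = sg y" by auto
    have yD: "y \<in> D" using y vxD a by auto
    have "\<forall>z\<in>D. \<exists>r\<in>{x, y}. (r, z) \<in> RS\<^sup>*"
    proof
      fix z assume z: "z \<in> D"
      show "\<exists>r\<in>{x, y}. (r, z) \<in> RS\<^sup>*"
      proof (cases "z \<in> vx sg tu b")
        case True then show ?thesis using allB by auto
      next
        case False
        then have zA: "z \<in> vx sg tu a" using z DU by auto
        show ?thesis
        proof (cases "z = y \<or> z = sg y")
          case True then show ?thesis using es[OF yD] by auto
        next
          case False
          then have "io z \<notin> vx sg tu a" using VL2[OF a y(1) y(2) zA] by auto
          then have "io z \<in> vx sg tu b" using iD[OF z] DU by auto
          then show ?thesis using hlp z by auto
        qed
      qed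
    qed
    then have "card (comps RS D) \<le> card {x, y}" by (intro CB) auto
    then show ?thesis using card2[of x y] by linarith
  next
    case False
    obtain w where w: "w \<in> vx sg tu a" "io w \<notin> vx sg tu a" using cross_exists[OF a] by auto
    have wD: "w \<in> D" using w vxD a by auto
    have wB: "io w \<in> vx sg tu b" using w iD[OF wD] DU by auto
    have xw: "(x, w) \<in> RS\<^sup>*" using hlp wD wB by auto
    have "\<forall>z\<in>D. \<exists>r\<in>{x}. (r, z) \<in> RS\<^sup>*"
    proof
      fix z assume z: "z \<in> D"
      show "\<exists>r\<in>{x}. (r, z) \<in> RS\<^sup>*"
      proof (cases "z \<in> vx sg tu b")
        case True then show ?thesis using allB by auto
      next
        case zb: False
        then have zA: "z \<in> vx sg tu a" using z DU by auto
        show ?thesis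
        proof (cases "io z \<in> vx sg tu a")
          case True
          have "io z \<noteq> sg z" using False zA by auto
          then have "(z, w) \<in> RS\<^sup>*" using VL1[OF a zA True] w by auto
          then have "(w, z) \<in> RS\<^sup>*" by (rule symR)
          then show ?thesis using xw rtrancl_trans by auto
        next
          case False
          then have "io z \<in> vx sg tu b" using iD[OF z] DU by auto
          then show ?thesis using hlp z by auto
        qed
      qed
    qed
    then have "card (comps RS D) \<le> card {x}" by (intro CB) auto
    then show ?thesis by simp
  qed
next
  case False
  then have BA: "\<forall>x\<in>vx sg tu b. io x \<in> vx sg tu a" using iD DU vxD[OF b] by blast
  have inj: "inj_on io (vx sg tu b)"
    using ii vxD[OF b] by (metis inj_onI subsetD)
  have "io ` vx sg tu b \<subseteq> vx sg tu a" using BA by auto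
  moreover have "card (io ` vx sg tu b) = card (vx sg tu a)"
    using card_image[OF inj] vx_card[OF a] vx_card[OF b] by simp
  ultimately have img: "io ` vx sg tu b = vx sg tu a"
    by (intro card_subset_eq) (auto simp: vx_def)
  have tb: "tu b \<in> D" using tD b by auto
  have repB: "\<exists>r\<in>{b, tu b}. (r, z) \<in> RS\<^sup>*" if "z \<in> vx sg tu b" for z
  proof -
    have "z = b \<or> z = sg b \<or> z = tu b \<or> z = sg (tu b)" using that unfolding vx_def by auto
    then show ?thesis using es[OF b] es[OF tb] by auto
  qed
  have "\<forall>z\<in>D. \<exists>r\<in>{b, tu b}. (r, z) \<in> RS\<^sup>*"
  proof
    fix z assume z: "z \<in> D"
    show "\<exists>r\<in>{b, tu b}. (r, z) \<in> RS\<^sup>*"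
    proof (cases "z \<in> vx sg tu b")
      case True then show ?thesis using repB by auto
    next
      case False
      then have "z \<in> vx sg tu a" using z DU by auto
      then obtain y where y: "y \<in> vx sg tu b" "z = io y" using img by auto
      have yD: "y \<in> D" using y vxD b by auto
      obtain r where r: "r \<in> {b, tu b}" "(r, y) \<in> RS\<^sup>*" using repB[OF y(1)] by auto
      then have "(r, z) \<in> RS\<^sup>*" using ei[OF yD] y(2) rtrancl_trans by metis
      then show ?thesis using r by auto
    qed
  qed
  then have "card (comps RS D) \<le> card {b, tu b}" by (intro CB) auto
  then show ?thesis using card2[of b "tu b"] by linarith
qed

lemma Dne: "\<exists>a. a \<in> D" using card_D by (metis card.empty ex_in_conv not_numeral_le_zero)

lemma L1: assumes "\<not> (\<forall>d\<in>D. \<exists>x\<in>vx sg tu d. io x = sg x)"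
  shows "card (comps RS D) \<le> 2"
proof -
  obtain d where d: "d \<in> D" "\<forall>x\<in>vx sg tu d. io x \<noteq> sg x" using assms by auto
  obtain b where b: "b \<in> D" "vx sg tu b \<inter> vx sg tu d = {}" "D = vx sg tu d \<union> vx sg tu b"
    using two_vx[OF d(1)] by auto
  show ?thesis
    by (rule L1'[OF b(1) d(1)]) (use b d in \<open>auto\<close>)
qed

lemma L2: assumes P: "\<forall>d\<in>D. \<exists>x\<in>vx sg tu d. io x = sg x"
  shows "card (comps RS D) \<le> 3"
proof -
  obtain a where a: "a \<in> D" using Dne by auto
  obtain b where b: "b \<in> D" "vx sg tu b \<inter> vx sg tu a = {}" "D = vx sg tu a \<union> vx sg tu b"
    using two_vx[OF a] by auto
  obtain x where x: "x \<in> vx sg tu a" "io x = sg x" using P a by auto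
  obtain y where y: "y \<in> vx sg tu b" "io y = sg y" using P b by auto
  have xD: "x \<in> D" using x vxD a by auto
  have yD: "y \<in> D" using y vxD b(1) by auto
  have VA: "vx sg tu a = {x, sg x, tu x, sg (tu x)}" using vx_mem[OF a x(1)] unfolding vx_def by simp
  have VB: "vx sg tu b = {y, sg y, tu y, sg (tu y)}" using vx_mem[OF b(1) y(1)] unfolding vx_def by simp
  have txD: "tu x \<in> D" using tD xD by auto
  have isx: "io (sg x) = x" using x(2) ii[OF xD] by metis
  have "\<forall>z\<in>D. \<exists>r\<in>{x, y, tu x}. (r, z) \<in> RS\<^sup>*"
  proof
    fix z assume z: "z \<in> D"
    show "\<exists>r\<in>{x, y, tu x}. (r, z) \<in> RS\<^sup>*"
    proof (cases "z \<in> vx sg tu a")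
      case True
      then have "z = x \<or> z = sg x \<or> z = tu x \<or> z = sg (tu x)" using VA by auto
      then show ?thesis using es[OF xD] es[OF txD] by auto
    next
      case False
      then have zB: "z \<in> vx sg tu b" using z b by auto
      show ?thesis
      proof (cases "z = y \<or> z = sg y")
        case True then show ?thesis using es[OF yD] by auto
      next
        case False
        then have "io z \<notin> vx sg tu b" using VL2[OF b(1) y(1) y(2) zB] by auto
        then have izA: "io z \<in> vx sg tu a" using iD[OF z] b by auto
        have "io z \<noteq> x"
        proof
          assume "io z = x" then have "z = sg x" using ii[OF z] x(2) by metis
          then show False using zB b(2) VA by auto
        qed
        moreover have "io z \<noteq> sg x"
        proof
          assume "io z = sg x" then have "z = x" using ii[OF z] isx by metis
          then show False using zB b(2) x(1) by auto
        qed
        ultimately have "io z = tu x \<or> io z = sg (tu x)" using izA VA by auto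
        then have "(tu x, io z) \<in> RS\<^sup>*" using es[OF txD] by auto
        then have "(tu x, z) \<in> RS\<^sup>*" using ei'[OF z] rtrancl_trans by metis
        then show ?thesis by auto
      qed
    qed
  qed
  then have "card (comps RS D) \<le> card {x, y, tu x}" by (intro CB) auto
  then show ?thesis using card3[of x y "tu x"] by linarith
qed

lemma L3: assumes P: "\<forall>d\<in>D. \<exists>x\<in>vx sg tu d. io x = tu x"
  shows "card (comps RS D) \<le> 1"
proof -
  obtain a where a: "a \<in> D" using Dne by auto
  obtain b where b: "b \<in> D" "vx sg tu b \<inter> vx sg tu a = {}" "D = vx sg tu a \<union> vx sg tu b"
    using two_vx[OF a] by auto
  obtain x where x: "x \<in> vx sg tu a" "io x = tu x" using P a by auto
  obtain y where y: "y \<in> vx sg tu b" "io y = tu y" using P b by auto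
  have xD: "x \<in> D" using x vxD a by auto
  have yD: "y \<in> D" using y vxD b(1) by auto
  have "io x \<in> vx sg tu a" using x(2) vx_closed[OF a x(1)] by simp
  moreover have "io x \<noteq> sg x" using x(2) st[OF xD] by simp
  ultimately have allA: "\<forall>z\<in>vx sg tu a. (x, z) \<in> RS\<^sup>*" using VL1[OF a x(1)] by blast
  have "io y \<in> vx sg tu b" using y(2) vx_closed[OF b(1) y(1)] by simp
  moreover have "io y \<noteq> sg y" using y(2) st[OF yD] by simp
  ultimately have allB: "\<forall>z\<in>vx sg tu b. (y, z) \<in> RS\<^sup>*" using VL1[OF b(1) y(1)] by blast
  obtain w where w: "w \<in> vx sg tu a" "io w \<notin> vx sg tu a" using cross_exists[OF a] by auto
  have wD: "w \<in> D" using w vxD a by auto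
  have wB: "io w \<in> vx sg tu b" using w iD[OF wD] b by auto
  have "(y, io w) \<in> RS\<^sup>*" using allB wB by blast
  then have 1: "(io w, y) \<in> RS\<^sup>*" by (rule symR)
  have "(x, w) \<in> RS\<^sup>*" using allA w(1) by blast
  then have "(x, io w) \<in> RS\<^sup>*" using ei[OF wD] by (rule rtrancl_trans)
  then have xy: "(x, y) \<in> RS\<^sup>*" using 1 by (rule rtrancl_trans)
  have "\<forall>z\<in>D. \<exists>r\<in>{x}. (r, z) \<in> RS\<^sup>*"
  proof
    fix z assume z: "z \<in> D"
    show "\<exists>r\<in>{x}. (r, z) \<in> RS\<^sup>*"
    proof (cases "z \<in> vx sg tu a")
      case True then show ?thesis using allA by auto
    next
      case False
      then have "z \<in> vx sg tu b" using z b by auto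
      then have "(y, z) \<in> RS\<^sup>*" using allB by blast
      then have "(x, z) \<in> RS\<^sup>*" by (rule rtrancl_trans[OF xy])
      then show ?thesis by blast
    qed
  qed
  then have "card (comps RS D) \<le> card {x}" by (intro CB) auto
  then show ?thesis by simp
qed

end

lemma kl_swap: "kl D io sg tu \<Longrightarrow> kl D io tu sg"
  unfolding kl_def
proof (elim conjE, intro conjI allI impI)
  fix d assume h: "\<forall>d. d \<in> D \<longrightarrow> sg (tu d) = tu (sg d)" "d \<in> D"
  then show "tu (sg d) = sg (tu d)" by simp
next
  fix d assume h: "\<forall>d. d \<in> D \<longrightarrow> sg d \<noteq> tu d" "d \<in> D"
  then show "tu d \<noteq> sg d" by auto
next
  fix x y assume h: "\<forall>x y. x \<in> D \<longrightarrow> y \<in> D \<longrightarrow> (x, y) \<in> (rel_of io D \<union> rel_of sg D \<union> rel_of tu D)\<^sup>*"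
    "x \<in> D" "y \<in> D"
  then show "(x, y) \<in> (rel_of io D \<union> rel_of tu D \<union> rel_of sg D)\<^sup>*"
    by (simp add: Un_ac)
qed auto

context kl begin

lemma vx_swap: "vx tu sg d = vx sg tu d" if "d \<in> D"
  using comm[OF that] unfolding vx_def by auto

theorem kl_main:
  "(card (comps RS D) \<le> 2 \<and> card (comps (rel_of io D \<union> rel_of tu D) D) \<le> 2) \<or>
   (card (comps RS D) \<le> 3 \<and> card (comps (rel_of io D \<union> rel_of tu D) D) \<le> 1) \<or>
   (card (comps RS D) \<le> 1 \<and> card (comps (rel_of io D \<union> rel_of tu D) D) \<le> 3)"
proof -
  interpret T: kl D io tu sg by (rule kl_swap) (rule kl_axioms)
  have e1: "(\<forall>d\<in>D. \<exists>x\<in>vx tu sg d. io x = P x) \<longleftrightarrow> (\<forall>d\<in>D. \<exists>x\<in>vx sg tu d. io x = P x)" for P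
    using vx_swap by auto
  show ?thesis
  proof (cases "\<forall>d\<in>D. \<exists>x\<in>vx sg tu d. io x = sg x")
    case True
    then show ?thesis using L2 T.L3 e1 by blast
  next
    case nsg: False
    show ?thesis
    proof (cases "\<forall>d\<in>D. \<exists>x\<in>vx sg tu d. io x = tu x")
      case True
      then show ?thesis using L3 T.L2 e1 by blast
    next
      case False
      then show ?thesis using L1 nsg T.L1 e1 by blast
    qed
  qed
qed

end


lemma pw: "(f ^^ 2) x = f (f x)" "(f ^^ 3) x = f (f (f x))" "(f ^^ 4) x = f (f (f (f x)))"
  by (simp_all add: eval_nat_numeral)

lemma bridge: assumes wf: "wf_config C" and dm: "dim C = 2"
  shows "kl (drt C) (iota C) (start_pair C) (end_pair C)"
proof -
  let ?D = "drt C" and ?r = "rho C" and ?s = "smo C"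
  have fin: "finite ?D" using wf unfolding wf_config_def by auto
  have rD: "\<And>d. d \<in> ?D \<Longrightarrow> ?r d \<in> ?D" using wf unfolding wf_config_def by auto
  have inj: "inj_on ?r ?D" using wf unfolding wf_config_def by auto
  have r4: "\<And>d. d \<in> ?D \<Longrightarrow> ?r (?r (?r (?r d))) = d" using wf unfolding wf_config_def pw by auto
  have r2: "\<And>d. d \<in> ?D \<Longrightarrow> ?r (?r d) \<noteq> d" using wf unfolding wf_config_def pw by auto
  have r1: "\<And>d. d \<in> ?D \<Longrightarrow> ?r d \<noteq> d" using wf unfolding wf_config_def by auto
  have sm: "\<And>d. d \<in> ?D \<Longrightarrow> ?s (?r d) = (\<not> ?s d)" using wf unfolding wf_config_def by auto
  have r3: "\<And>d. d \<in> ?D \<Longrightarrow> ?r (?r (?r d)) \<noteq> d"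
  proof
    fix d assume d: "d \<in> ?D" "?r (?r (?r d)) = d"
    have e: "?r (?r (?r (?r d))) = ?r d" using d(2) by simp
    have "?r d = d" using e r4[OF d(1)] by simp
    then show False using r1[OF d(1)] by simp
  qed
  have r13: "\<And>d. d \<in> ?D \<Longrightarrow> ?r d \<noteq> ?r (?r (?r d))"
  proof
    fix d assume d: "d \<in> ?D" "?r d = ?r (?r (?r d))"
    then have "d = ?r (?r d)" using inj rD by (meson inj_on_contraD)
    then show False using r2[OF d(1)] by simp
  qed
  have sp: "\<And>d. start_pair C d = (if ?s d then ?r d else ?r (?r (?r d)))"
    unfolding start_pair_def pw by simp
  have ep: "\<And>d. end_pair C d = (if ?s d then ?r (?r (?r d)) else ?r d)"
    unfolding end_pair_def pw by simp
  show ?thesis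
    unfolding kl_def
  proof (intro conjI allI impI)
    show "finite ?D" by fact
    show "card ?D div 4 = 2" using dm unfolding dim_def .
  next
    fix d assume d: "d \<in> ?D"
    show "iota C d \<in> ?D" "iota C (iota C d) = d" "iota C d \<noteq> d"
      using wf d unfolding wf_config_def by auto
    show "start_pair C d \<in> ?D" "end_pair C d \<in> ?D" using d rD sp ep by auto
    show "start_pair C (start_pair C d) = d" "end_pair C (end_pair C d) = d"
      using d rD sm r4 sp ep by auto
    show "start_pair C d \<noteq> d" "end_pair C d \<noteq> d" using d r1 r3 sp ep by auto
    show "start_pair C (end_pair C d) = end_pair C (start_pair C d)"
      using d rD sm r4 sp ep by auto
    show "start_pair C d \<noteq> end_pair C d" using d r13[OF d] sp ep by (cases "smo C d") (auto dest: sym)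
  next
    fix x y assume xy: "x \<in> ?D" "y \<in> ?D"
    have "(x, y) \<in> (rel_of (iota C) ?D \<union> rel_of ?r ?D)\<^sup>*"
      using wf xy unfolding wf_config_def by auto
    moreover have "rel_of (iota C) ?D \<union> rel_of ?r ?D \<subseteq>
        rel_of (iota C) ?D \<union> rel_of (start_pair C) ?D \<union> rel_of (end_pair C) ?D"
      unfolding rel_of_def using sp ep by auto
    ultimately show "(x, y) \<in> (rel_of (iota C) ?D \<union> rel_of (start_pair C) ?D \<union> rel_of (end_pair C) ?D)\<^sup>*"
      using rtrancl_mono by blast
  qed
qed


lemma key:
  fixes F :: assignment and C :: cfg
  assumes wf: "wf_config C" and dm: "dim C = 2"
    and filt: "filtration F" and qd: "has_qdeg F C 4"
    and ab: "a \<subseteq> start_circles C" "b \<subseteq> end_circles C" "F C a b"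
  shows "(a = start_circles C \<and> b = end_circles C \<and> card (start_circles C) = 3 \<and> card (end_circles C) = 1)
       \<or> (a = {} \<and> b = {} \<and> card (start_circles C) = 1 \<and> card (end_circles C) = 3)"
proof -
  let ?S = "start_circles C" and ?E = "end_circles C" and ?D = "drt C"
  interpret K: kl ?D "iota C" "start_pair C" "end_pair C" by (rule bridge[OF wf dm])
  have SS: "?S = comp_of (start_rel C) ` ?D" unfolding start_circles_def comps_def ..
  have EE: "?E = comp_of (end_rel C) ` ?D" unfolding end_circles_def comps_def ..
  have bnd: "(card ?S \<le> 2 \<and> card ?E \<le> 2) \<or> (card ?S \<le> 3 \<and> card ?E \<le> 1) \<or> (card ?S \<le> 1 \<and> card ?E \<le> 3)"
    using K.kl_main unfolding start_circles_def end_circles_def start_rel_def end_rel_def .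
  have finS: "finite ?S" and finE: "finite ?E" using SS EE K.fin by auto
  obtain d0 where d0: "d0 \<in> ?D" using K.Dne by auto
  have Sne: "?S \<noteq> {}" and Ene: "?E \<noteq> {}" using SS EE d0 by auto
  have s1: "1 \<le> card ?S" and e1: "1 \<le> card ?E" using finS finE Sne Ene
    by (simp_all add: Suc_le_eq card_gt_0_iff)
  have ca: "card a \<le> card ?S" using ab(1) finS by (rule card_mono[rotated])
  have cb: "card b \<le> card ?E" using ab(2) finE by (rule card_mono[rotated])
  have q: "int (card ?E) - 2 * int (card b) + int (dim C) = int (card ?S) - 2 * int (card a) + 4"
    using qd ab unfolding has_qdeg_def by blast
  have F1: "b \<noteq> {}" if an: "a \<noteq> {}"
  proof -
    obtain x where x: "x \<in> a" using an by auto
    then obtain h where h: "h \<in> ?D" "x = comp_of (start_rel C) h" using ab(1) SS by auto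
    have "end_circle_of C h \<in> b"
      using filt wf ab h x unfolding filtration_def start_circle_of_def by blast
    then show ?thesis by auto
  qed
  have F2: "b = ?E" if aS: "a = ?S"
  proof
    show "?E \<subseteq> b"
    proof
      fix y assume "y \<in> ?E"
      then obtain h where h: "h \<in> ?D" "y = comp_of (end_rel C) h" using EE by auto
      have "start_circle_of C h \<in> a" using h aS SS unfolding start_circle_of_def by auto
      then have "end_circle_of C h \<in> b"
        using filt wf ab h unfolding filtration_def by blast
      then show "y \<in> b" using h unfolding end_circle_of_def by simp
    qed
  qed (use ab in auto)
  show ?thesis
  proof (cases "a = {}")
    case True
    then have "card a = 0" by simp
    then have "card b = 0" "card ?S = 1" "card ?E = 3" using q dm bnd s1 e1 by auto
    moreover have "finite b" using finE ab(2) by (rule finite_subset[rotated])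
    ultimately show ?thesis using True by simp
  next
    case False
    then have bne: "b \<noteq> {}" by (rule F1)
    then have "card b \<ge> 1" using finE ab(2) by (metis card_0_eq finite_subset less_one not_le)
    show ?thesis
    proof (cases "a = ?S")
      case True
      then have "b = ?E" by (rule F2)
      then have "card ?S = 3" "card ?E = 1" using q dm bnd s1 e1 True by auto
      then show ?thesis using True \<open>b = ?E\<close> by auto
    next
      case ne: False
      then have "card a < card ?S" using ab(1) finS by (meson psubsetI psubset_card_mono)
      then show ?thesis using q dm bnd s1 e1 \<open>card b \<ge> 1\<close> by auto
    qed
  qed
qed

theorem lemma3p1:
  fixes F :: assignment and C :: cfg
  assumes "wf_config C" and "dim C = 2"
    and "naturality F" and "duality F" and "filtration F"
    and "map_nonzero F C" and "has_qdeg F C 4"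
  shows "(is_tree C \<or> is_dual_tree C)
    \<and> (is_tree C \<longrightarrow> (\<forall>a b. a \<subseteq> start_circles C \<longrightarrow> b \<subseteq> end_circles C \<longrightarrow>
          (F C a b \<longleftrightarrow> a = start_circles C \<and> b = end_circles C)))
    \<and> (is_dual_tree C \<longrightarrow>
          (\<forall>b. b \<subseteq> end_circles C \<longrightarrow> (F C {} b \<longleftrightarrow> b = {}))
          \<and> (\<forall>b. b \<subseteq> end_circles C \<longrightarrow> \<not> F C (start_circles C) b))"
proof -
  note K = key[OF assms(1,2,5,7)]
  obtain a0 b0 where ab0: "a0 \<subseteq> start_circles C" "b0 \<subseteq> end_circles C" "F C a0 b0"
    using assms(6) unfolding map_nonzero_def by auto
  note K0 = K[OF ab0]
  have tr: "is_tree C \<longleftrightarrow> card (start_circles C) = 3 \<and> card (end_circles C) = 1"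
    unfolding is_tree_def using assms(2) by simp
  have dt: "is_dual_tree C \<longleftrightarrow> card (start_circles C) = 1 \<and> card (end_circles C) = 3"
    unfolding is_dual_tree_def using assms(2) by simp
  have P1: "is_tree C \<or> is_dual_tree C" using K0 tr dt by auto
  have P2: "is_tree C \<longrightarrow> (\<forall>a b. a \<subseteq> start_circles C \<longrightarrow> b \<subseteq> end_circles C \<longrightarrow>
          (F C a b \<longleftrightarrow> a = start_circles C \<and> b = end_circles C))"
  proof (intro impI allI)
    fix a b assume t: "is_tree C" and a: "a \<subseteq> start_circles C" and b: "b \<subseteq> end_circles C"
    show "F C a b \<longleftrightarrow> a = start_circles C \<and> b = end_circles C"
    proof
      assume "F C a b" then show "a = start_circles C \<and> b = end_circles C"
        using K[OF a b] t tr by auto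
    next
      assume "a = start_circles C \<and> b = end_circles C"
      moreover have "a0 = start_circles C \<and> b0 = end_circles C" using K0 t tr by auto
      ultimately show "F C a b" using ab0 by simp
    qed
  qed
  have P3: "is_dual_tree C \<longrightarrow>
          (\<forall>b. b \<subseteq> end_circles C \<longrightarrow> (F C {} b \<longleftrightarrow> b = {}))
          \<and> (\<forall>b. b \<subseteq> end_circles C \<longrightarrow> \<not> F C (start_circles C) b)"
  proof (intro impI conjI allI)
    assume t: "is_dual_tree C"
    have z: "a0 = {} \<and> b0 = {}" using K0 t dt by auto
    fix b assume b: "b \<subseteq> end_circles C"
    show "F C {} b \<longleftrightarrow> b = {}"
    proof
      assume "F C {} b" then show "b = {}" using K[OF _ b] t dt by auto
    next
      assume "b = {}" then show "F C {} b" using z ab0 by simp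
    qed
  next
    assume t: "is_dual_tree C"
    fix b assume b: "b \<subseteq> end_circles C"
    show "\<not> F C (start_circles C) b"
    proof
      assume f: "F C (start_circles C) b"
      have "start_circles C \<noteq> {}" using t dt by auto
      then show False using K[OF _ b f] t dt by auto
    qed
  qed
  show ?thesis using P1 P2 P3 by blast
qed

end
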